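(* Let $\mathcal{T}\in(\mathbb{R}^4)^{\otimes 4}$ be the symmetric tensor corresponding to the quartic $x^4-3y^4+12x^2yz+12xy^2w$ in the variables $x,y,z,w$. Then $\operatorname{drk}_2\mathcal{T}=\operatorname{sdrk}_2\mathcal{T}=9$.
   Context: All tensors are real. Symmetric tensors $\mathcal{T}\in(\mathbb{R}^I)^{\otimes d}$ correspond bijectively to homogeneous degree $d$ polynomials via $\mathcal{T}\leftrightarrow\sum_{k_1,\dots,k_d\in I}\mathcal{T}(k_1|\dots|k_d)x_{k_1}\cdots x_{k_d}$. For a symmetric $\mathcal{T}\in(\mathbb{R}^I)^{\otimes d}$ and $1\le j\le d$, the slice space $\mathcal{L}_j\subset(\mathbb{R}^I)^{\otimes j}$ is the linear span of all order $j$ slices obtained by fixing the last $d-j$ indices of $\mathcal{T}$ to arbitrary values. $\operatorname{drk}_j\mathcal{T}$ is the smallest $r$ such that there are $r$ decomposable tensors $v_1\otimes\cdots\otimes v_j$ whose linear span contains $\mathcal{L}_j$; $\operatorname{sdrk}_j\mathcal{T}$ is the smallest $r$ such that there are $r$ symmetric decomposable tensors $\lambda v^{\otimes j}$ whose linear span contains $\mathcal{L}_j$. *)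

theory Defs
  imports "HOL-Analysis.Analysis"
begin

text \<open>Order-4 tensors over R^I with I = the 4-element type '4 (elements 0,1,2,3
  standing for the variables x,y,z,w), represented as real^'4^'4^'4^'4;
  order-2 tensors in R^I (x) R^I are real^'4^'4.\<close>

type_synonym tensor4 = "real^4^4^4^4"
type_synonym tensor2 = "real^4^4"

definition entry4 :: "tensor4 \<Rightarrow> (nat \<Rightarrow> 4) \<Rightarrow> real" where
  "entry4 T k = T $ k 0 $ k 1 $ k 2 $ k 3"

definition symmetric4 :: "tensor4 \<Rightarrow> bool" where
  "symmetric4 T \<longleftrightarrow> (\<forall>k \<sigma>. \<sigma> permutes {0..<4} \<longrightarrow> entry4 T (k \<circ> \<sigma>) = entry4 T k)"

definition tensor_poly4 :: "tensor4 \<Rightarrow> real^4 \<Rightarrow> real" where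
  "tensor_poly4 T x = (\<Sum>a\<in>UNIV. \<Sum>b\<in>UNIV. \<Sum>c\<in>UNIV. \<Sum>d\<in>UNIV.
       T $ a $ b $ c $ d * x $ a * x $ b * x $ c * x $ d)"

definition slice_space2 :: "tensor4 \<Rightarrow> tensor2 set" where
  "slice_space2 T = span {(\<chi> a b. T $ a $ b $ c $ d) | c d. True}"

definition outer2 :: "real^4 \<Rightarrow> real^4 \<Rightarrow> tensor2" where
  "outer2 u v = (\<chi> a b. u $ a * v $ b)"

definition drk2 :: "tensor4 \<Rightarrow> nat" where
  "drk2 T = (LEAST r. \<exists>u v :: nat \<Rightarrow> real^4.
      slice_space2 T \<subseteq> span ((\<lambda>i. outer2 (u i) (v i)) ` {..<r}))"

definition sdrk2 :: "tensor4 \<Rightarrow> nat" where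
  "sdrk2 T = (LEAST r. \<exists>(c :: nat \<Rightarrow> real) (v :: nat \<Rightarrow> real^4).
      slice_space2 T \<subseteq> span ((\<lambda>i. c i *\<^sub>R outer2 (v i) (v i)) ` {..<r}))"

end

theory Submission
  imports Defs
begin


lemma four_eq0: "(4::4) = 0" by simp

lemma UNIV4: "(UNIV::4 set) = {0,1,2,3}"
  using exhaust_4 four_eq0 by auto

lemma sum4: "sum f (UNIV::4 set) = f 0 + f 1 + f 2 + f 3"
  unfolding UNIV4 by (simp add: ac_simps)

lemma forall4: "(\<forall>i::4. P i) \<longleftrightarrow> P 0 \<and> P 1 \<and> P 2 \<and> P 3"
  by (metis UNIV4 UNIV_I insertE empty_iff)

definition Mx :: "real \<Rightarrow> real \<Rightarrow> real \<Rightarrow> real \<Rightarrow> real \<Rightarrow> real \<Rightarrow> tensor2" where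
  "Mx d e g s1 s2 s3 = (\<chi> i j.
     if i = 0 then (if j = 0 then s1 else if j = 1 then s3 else if j = 2 then g else d)
     else if i = 1 then (if j = 0 then s3 else if j = 1 then s2 else if j = 2 then e else g)
     else if i = 2 then (if j = 0 then g else if j = 1 then e else 0)
     else (if j = 0 then d else if j = 1 then g else 0))"

lemma Mx_mv:
  "(Mx d e g s1 s2 s3 *v x) $ 0 = s1 * x$0 + s3 * x$1 + g * x$2 + d * x$3"
  "(Mx d e g s1 s2 s3 *v x) $ 1 = s3 * x$0 + s2 * x$1 + e * x$2 + g * x$3"
  "(Mx d e g s1 s2 s3 *v x) $ 2 = g * x$0 + e * x$1"
  "(Mx d e g s1 s2 s3 *v x) $ 3 = d * x$0 + g * x$1"
  by (simp_all add: Mx_def matrix_vector_mult_def sum4)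

definition rep :: "(nat \<Rightarrow> tensor2) \<Rightarrow> nat set \<Rightarrow> tensor2 \<Rightarrow> bool" where
  "rep R I M \<longleftrightarrow> (\<exists>f. M = (\<Sum>i\<in>I. f i *\<^sub>R R i))"

lemma outer2_mv: "outer2 u v *v x = (v \<bullet> x) *\<^sub>R u"
  by (auto simp: vec_eq_iff outer2_def matrix_vector_mult_def inner_vec_def sum_distrib_right
      intro!: sum.cong)

lemma scaleR_mv: "(c *\<^sub>R A) *v x = c *\<^sub>R (A *v (x::real^4))"
  by (simp add: vec_eq_iff matrix_vector_mult_def sum_distrib_left mult.assoc)

lemma sum_mv: "(\<Sum>i\<in>I. f i *\<^sub>R M i) *v (x::real^4) = (\<Sum>i\<in>I. f i *\<^sub>R (M i *v x))"
  by (induct I rule: infinite_finite_induct) (simp_all add: matrix_vector_mult_add_rdistrib scaleR_mv)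

lemma mv_sum: "(G::real^4^4) *v (\<Sum>i\<in>I. f i *\<^sub>R x i) = (\<Sum>i\<in>I. f i *\<^sub>R (G *v x i))"
  by (induct I rule: infinite_finite_induct)
    (simp_all add: matrix_vector_right_distrib matrix_vector_mult_scaleR)

lemma rep_mv:
  assumes "\<forall>i. R i = outer2 (u i) (v i)"
  shows "(\<Sum>i\<in>I. f i *\<^sub>R R i) *v x = (\<Sum>i\<in>I. (f i * (v i \<bullet> x)) *\<^sub>R u i)"
  using assms by (simp add: sum_mv outer2_mv)

lemma indep_family:
  fixes u :: "nat \<Rightarrow> real^4"
  assumes fin: "finite J" and cardJ: "card J \<le> 4" and sp: "span (u ` J) = UNIV"
    and sum0: "(\<Sum>j\<in>J. c j *\<^sub>R u j) = 0" and jJ: "j \<in> J"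
  shows "c j = 0"
proof -
  have d4: "dim (UNIV :: (real^4) set) = 4" by (simp add: dim_UNIV)
  have "dim (UNIV::(real^4) set) \<le> card (u ` J)"
    using span_card_ge_dim[of "u`J" UNIV] sp fin by auto
  hence cu: "card (u ` J) = card J" using card_image_le[OF fin, of u] cardJ d4 by linarith
  hence inj: "inj_on u J" using eq_card_imp_inj_on fin by blast
  have ind: "independent (u ` J)"
    using card_le_dim_spanning[of "u`J" UNIV] sp fin cu cardJ d4 by auto
  define c' where "c' w = c (the_inv_into J u w)" for w
  have "(\<Sum>w\<in>u ` J. c' w *\<^sub>R w) = (\<Sum>j\<in>J. c' (u j) *\<^sub>R u j)"
    by (rule sum.reindex[OF inj, unfolded comp_def])
  also have "\<dots> = (\<Sum>j\<in>J. c j *\<^sub>R u j)"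
    by (rule sum.cong) (simp_all add: c'_def the_inv_into_f_f[OF inj])
  finally have "(\<Sum>w\<in>u ` J. c' w *\<^sub>R w) = 0" using sum0 by simp
  hence "\<forall>w\<in>u ` J. c' w = 0" using ind dependent_finite[of "u ` J"] fin by blast
  thus ?thesis using jJ by (simp add: c'_def the_inv_into_f_f[OF inj])
qed

definition blkdet :: "real \<Rightarrow> real \<Rightarrow> real \<Rightarrow> real \<Rightarrow> real \<Rightarrow> real \<Rightarrow> real \<Rightarrow> real \<Rightarrow>
     real \<Rightarrow> real \<Rightarrow> real \<Rightarrow> real \<Rightarrow> real" where
  "blkdet a0 b0 c0 d0 a1 b1 c1 d1 a2 b2 c2 d2 =
    (let p11 = a1*d0 - b1*c0; p12 = b1*a0 - a1*b0; p21 = c1*d0 - d1*c0; p22 = d1*a0 - c1*b0;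
         r11 = a2*d0 - b2*c0; r12 = b2*a0 - a2*b0; r21 = c2*d0 - d2*c0; r22 = d2*a0 - c2*b0;
         q11 = (p11*a2 + p12*c2) - (r11*a1 + r12*c1);
         q12 = (p11*b2 + p12*d2) - (r11*b1 + r12*d1);
         q21 = (p21*a2 + p22*c2) - (r21*a1 + r22*c1);
         q22 = (p21*b2 + p22*d2) - (r21*b1 + r22*d1)
     in q11*q22 - q12*q21)"

lemma blk:
  fixes a0 b0 c0 d0 a1 b1 c1 d1 a2 b2 c2 d2 y1 y2 w1 w2 z1 z2 :: real
  assumes e1: "a0*y1 + b0*y2 = a2*z1 + b2*z2" "c0*y1 + d0*y2 = c2*z1 + d2*z2"
    and e2: "a0*w1 + b0*w2 = a1*z1 + b1*z2" "c0*w1 + d0*w2 = c1*z1 + d1*z2"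
    and e3: "a1*y1 + b1*y2 = a2*w1 + b2*w2" "c1*y1 + d1*y2 = c2*w1 + d2*w2"
  shows "blkdet a0 b0 c0 d0 a1 b1 c1 d1 a2 b2 c2 d2 * z1 = 0 \<and>
         blkdet a0 b0 c0 d0 a1 b1 c1 d1 a2 b2 c2 d2 * z2 = 0"
proof -
  define p11 where "p11 = a1*d0 - b1*c0"
  define p12 where "p12 = b1*a0 - a1*b0"
  define p21 where "p21 = c1*d0 - d1*c0"
  define p22 where "p22 = d1*a0 - c1*b0"
  define r11 where "r11 = a2*d0 - b2*c0"
  define r12 where "r12 = b2*a0 - a2*b0"
  define r21 where "r21 = c2*d0 - d2*c0"
  define r22 where "r22 = d2*a0 - c2*b0"
  define q11 where "q11 = (p11*a2 + p12*c2) - (r11*a1 + r12*c1)"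
  define q12 where "q12 = (p11*b2 + p12*d2) - (r11*b1 + r12*d1)"
  define q21 where "q21 = (p21*a2 + p22*c2) - (r21*a1 + r22*c1)"
  define q22 where "q22 = (p21*b2 + p22*d2) - (r21*b1 + r22*d1)"
  define dl where "dl = a0*d0 - b0*c0"
  have y1: "dl*y1 = d0*(a2*z1 + b2*z2) - b0*(c2*z1 + d2*z2)"
    unfolding dl_def using e1 by algebra
  have y2: "dl*y2 = a0*(c2*z1 + d2*z2) - c0*(a2*z1 + b2*z2)"
    unfolding dl_def using e1 by algebra
  have w1: "dl*w1 = d0*(a1*z1 + b1*z2) - b0*(c1*z1 + d1*z2)"
    unfolding dl_def using e2 by algebra
  have w2: "dl*w2 = a0*(c1*z1 + d1*z2) - c0*(a1*z1 + b1*z2)"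
    unfolding dl_def using e2 by algebra
  have f1: "a1*(dl*y1) + b1*(dl*y2) = a2*(dl*w1) + b2*(dl*w2)"
    using e3(1) by (metis distrib_left mult.left_commute)
  have f2: "c1*(dl*y1) + d1*(dl*y2) = c2*(dl*w1) + d2*(dl*w2)"
    using e3(2) by (metis distrib_left mult.left_commute)
  have g1: "q11*z1 + q12*z2 = 0"
    using f1 unfolding y1 y2 w1 w2 q11_def q12_def p11_def p12_def r11_def r12_def by algebra
  have g2: "q21*z1 + q22*z2 = 0"
    using f2 unfolding y1 y2 w1 w2 q21_def q22_def p21_def p22_def r21_def r22_def by algebra
  have bd: "blkdet a0 b0 c0 d0 a1 b1 c1 d1 a2 b2 c2 d2 = q11*q22 - q12*q21"
    unfolding blkdet_def Let_def q11_def q12_def q21_def q22_def p11_def p12_def p21_def p22_def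
      r11_def r12_def r21_def r22_def by simp
  have "(q11*q22 - q12*q21)*z1 = q22*(q11*z1 + q12*z2) - q12*(q21*z1 + q22*z2)" by algebra
  moreover have "(q11*q22 - q12*q21)*z2 = q11*(q21*z1 + q22*z2) - q21*(q11*z1 + q12*z2)" by algebra
  ultimately show ?thesis using g1 g2 bd by simp
qed

lemma blkdet_N:
  "blkdet g0 e0 d0 g0 g1 e1 d1 g1 g2 e2 d2 g2 =
     - ((d0*(e1*g2 - g1*e2) - e0*(d1*g2 - g1*d2) + g0*(d1*e2 - e1*d2))^2)"
  unfolding blkdet_def Let_def by algebra

lemma blkdet_N':
  "blkdet g0 d0 e0 g0 g1 d1 e1 g1 g2 d2 e2 g2 =
     - ((d0*(e1*g2 - g1*e2) - e0*(d1*g2 - g1*d2) + g0*(d1*e2 - e1*d2))^2)"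
  unfolding blkdet_def Let_def by algebra

lemma card2: "card {a, b} \<le> 2"
  by (cases "a = b") auto

lemma core:
  fixes R :: "nat \<Rightarrow> tensor2" and u v :: "nat \<Rightarrow> real^4"
  assumes Ruv: "\<forall>i. R i = outer2 (u i) (v i)"
    and finJ: "finite J" and cardJ: "card J \<le> 4"
    and r0: "rep R J (Mx d0 e0 g0 p1 p2 p3)"
    and r1: "rep R J (Mx d1 e1 g1 q1 q2 q3)"
    and r2: "rep R J (Mx d2 e2 g2 s1 s2 s3 - lam *\<^sub>R R i0)"
    and del: "g0^2 - d0*e0 \<noteq> 0"
    and Del: "d0*(e1*g2 - g1*e2) - e0*(d1*g2 - g1*d2) + g0*(d1*e2 - e1*d2) \<noteq> 0"
  shows False
proof -
  define M0 where "M0 = Mx d0 e0 g0 p1 p2 p3"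
  define M1 where "M1 = Mx d1 e1 g1 q1 q2 q3"
  define M2 where "M2 = Mx d2 e2 g2 s1 s2 s3"
  define X2 where "X2 = M2 - lam *\<^sub>R R i0"
  have ker: "x = 0" if "M0 *v x = 0" for x
  proof -
    have c: "(M0 *v x)$0 = 0" "(M0 *v x)$1 = 0" "(M0 *v x)$2 = 0" "(M0 *v x)$3 = 0"
      using that by simp_all
    hence h: "p1 * x$0 + p3 * x$1 + g0 * x$2 + d0 * x$3 = 0"
      "p3 * x$0 + p2 * x$1 + e0 * x$2 + g0 * x$3 = 0"
      "g0 * x$0 + e0 * x$1 = 0" "d0 * x$0 + g0 * x$1 = 0"
      unfolding M0_def Mx_mv by simp_all
    have "(g0^2 - d0*e0) * x$0 = 0" using h(3,4) by algebra
    hence x0: "x$0 = 0" using del by simp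
    have "(g0^2 - d0*e0) * x$1 = 0" using h(3,4) by algebra
    hence x1: "x$1 = 0" using del by simp
    have h2: "g0 * x$2 + d0 * x$3 = 0" "e0 * x$2 + g0 * x$3 = 0" using h(1,2) x0 x1 by simp_all
    have "(g0^2 - d0*e0) * x$2 = 0" using h2 by algebra
    hence x2: "x$2 = 0" using del by simp
    have "(g0^2 - d0*e0) * x$3 = 0" using h2 by algebra
    hence x3: "x$3 = 0" using del by simp
    show ?thesis using x0 x1 x2 x3 by (simp add: vec_eq_iff forall4)
  qed
  have "inj ((*v) M0)"
  proof (rule injI)
    fix x y assume "M0 *v x = M0 *v y"
    hence "M0 *v (x - y) = 0" by (simp add: matrix_vector_mult_diff_distrib)
    thus "x = y" using ker[of "x - y"] by simp
  qed
  then obtain G where GM: "G ** M0 = mat 1" using matrix_left_invertible_injective by blast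
  hence MG: "M0 ** G = mat 1" using matrix_left_right_inverse by blast
  have MGv: "M0 *v (G *v y) = y" for y by (simp add: matrix_vector_mul_assoc MG)
  obtain a where a: "M0 = (\<Sum>j\<in>J. a j *\<^sub>R R j)" using r0 unfolding rep_def M0_def by blast
  have M0v: "M0 *v x = (\<Sum>j\<in>J. (a j * (v j \<bullet> x)) *\<^sub>R u j)" for x
    unfolding a by (rule rep_mv[OF Ruv])
  have sp: "span (u ` J) = UNIV"
  proof -
    have "y \<in> span (u ` J)" for y
    proof -
      have "y = (\<Sum>j\<in>J. (a j * (v j \<bullet> (G *v y))) *\<^sub>R u j)"
        using MGv[of y] M0v[of "G *v y"] by simp
      also have "\<dots> \<in> span (u ` J)" by (intro span_sum span_scale span_base imageI)
      finally show ?thesis .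
    qed
    thus ?thesis by auto
  qed
  define w where "w j = G *v u j" for j
  have coef: "a i * (v i \<bullet> w j) = (if i = j then 1 else 0)" if "i \<in> J" "j \<in> J" for i j
  proof -
    have s1: "(\<Sum>i\<in>J. (a i * (v i \<bullet> w j)) *\<^sub>R u i) = u j"
      using M0v[of "w j"] MGv[of "u j"] by (simp add: w_def)
    have "(\<Sum>i\<in>J. (if i = j then 1 else 0) *\<^sub>R u i) = (\<Sum>i\<in>J. if i = j then u i else 0)"
      by (rule sum.cong) auto
    also have "\<dots> = u j" using that(2) finJ by (simp add: sum.delta)
    finally have s2: "(\<Sum>i\<in>J. (if i = j then 1 else 0) *\<^sub>R u i) = u j" .
    have "(\<Sum>i\<in>J. (a i * (v i \<bullet> w j) - (if i = j then 1 else 0)) *\<^sub>R u i) = 0"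
      using s1 s2 by (simp add: scaleR_left_diff_distrib sum_subtractf)
    from indep_family[OF finJ cardJ sp this that(1)] show ?thesis by simp
  qed
  have orth: "v i \<bullet> w j = 0" if "i \<in> J" "j \<in> J" "i \<noteq> j" for i j
  proof -
    have "a i \<noteq> 0" using coef[OF that(1) that(1)] by auto
    moreover have "a i * (v i \<bullet> w j) = 0" using coef[OF that(1) that(2)] that(3) by simp
    ultimately show ?thesis by simp
  qed
  have comm_form: "(\<Sum>i\<in>J. x i *\<^sub>R R i) *v (G *v ((\<Sum>i\<in>J. y i *\<^sub>R R i) *v z)) =
      (\<Sum>i\<in>J. (x i * (y i * (v i \<bullet> z) * (v i \<bullet> w i))) *\<^sub>R u i)" for x y z
  proof -
    have t: "G *v ((\<Sum>i\<in>J. y i *\<^sub>R R i) *v z) = (\<Sum>j\<in>J. (y j * (v j \<bullet> z)) *\<^sub>R w j)"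
      unfolding rep_mv[OF Ruv] mv_sum w_def ..
    have ip: "v i \<bullet> (\<Sum>j\<in>J. (y j * (v j \<bullet> z)) *\<^sub>R w j) = y i * (v i \<bullet> z) * (v i \<bullet> w i)"
      if "i \<in> J" for i
    proof -
      have "v i \<bullet> (\<Sum>j\<in>J. (y j * (v j \<bullet> z)) *\<^sub>R w j) = (\<Sum>j\<in>J. (y j * (v j \<bullet> z)) * (v i \<bullet> w j))"
        by (simp add: inner_sum_right)
      also have "\<dots> = (y i * (v i \<bullet> z)) * (v i \<bullet> w i) +
          (\<Sum>j\<in>J-{i}. (y j * (v j \<bullet> z)) * (v i \<bullet> w j))"
        by (rule sum.remove[OF finJ that])
      also have "(\<Sum>j\<in>J-{i}. (y j * (v j \<bullet> z)) * (v i \<bullet> w j)) = 0"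
        by (rule sum.neutral) (auto simp: orth that)
      finally show ?thesis by simp
    qed
    have "(\<Sum>i\<in>J. x i *\<^sub>R R i) *v (G *v ((\<Sum>i\<in>J. y i *\<^sub>R R i) *v z)) =
        (\<Sum>i\<in>J. x i *\<^sub>R R i) *v (\<Sum>j\<in>J. (y j * (v j \<bullet> z)) *\<^sub>R w j)" using t by simp
    also have "\<dots> = (\<Sum>i\<in>J. (x i * (v i \<bullet> (\<Sum>j\<in>J. (y j * (v j \<bullet> z)) *\<^sub>R w j))) *\<^sub>R u i)"
      by (rule rep_mv[OF Ruv])
    also have "\<dots> = (\<Sum>i\<in>J. (x i * (y i * (v i \<bullet> z) * (v i \<bullet> w i))) *\<^sub>R u i)"
      by (rule sum.cong) (simp_all add: ip)
    finally show ?thesis .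
  qed
  have comm: "X *v (G *v (Y *v z)) = Y *v (G *v (X *v z))" if rX: "rep R J X" and rY: "rep R J Y" for X Y z
  proof -
    obtain x where x: "X = (\<Sum>i\<in>J. x i *\<^sub>R R i)" using rX rep_def by blast
    obtain y where y: "Y = (\<Sum>i\<in>J. y i *\<^sub>R R i)" using rY rep_def by blast
    show ?thesis unfolding x y comm_form by (simp add: mult_ac)
  qed
  define h where "h = (v i0) v* (G ** M1)"
  have "dim {v i0, h} \<le> card {v i0, h}" by (rule dim_le_card') simp
  also have "\<dots> \<le> 2" by (rule card2)
  finally have "dim {v i0, h} < DIM(real^4)" by simp
  then obtain z where z0: "z \<noteq> 0" and zo: "\<And>y. y \<in> span {v i0, h} \<Longrightarrow> orthogonal z y"
    by (rule orthogonal_to_subspace_exists) blast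
  have oz1: "v i0 \<bullet> z = 0" using zo[of "v i0"] by (simp add: span_base orthogonal_def inner_commute)
  have oz2: "v i0 \<bullet> (G *v (M1 *v z)) = 0"
  proof -
    have "h \<bullet> z = 0" using zo[of h] by (simp add: span_base orthogonal_def inner_commute)
    thus ?thesis by (simp add: h_def dot_lmul_matrix matrix_vector_mul_assoc)
  qed
  define y' where "y' = G *v (M1 *v z)"
  define y where "y = G *v (M2 *v z)"
  have eb: "M0 *v y' = M1 *v z" by (simp add: y'_def MGv)
  have ea: "M0 *v y = M2 *v z" by (simp add: y_def MGv)
  have RZ: "R i0 *v t = (v i0 \<bullet> t) *\<^sub>R u i0" for t using Ruv outer2_mv by simp
  have M2eq: "M2 = X2 + lam *\<^sub>R R i0" by (simp add: X2_def)
  have rX2: "rep R J X2" using r2 by (simp add: X2_def M2_def)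
  have rM1: "rep R J M1" using r1 by (simp add: M1_def)
  have ec: "M1 *v y = M2 *v y'"
  proof -
    have "M2 *v z = X2 *v z" using oz1
      by (simp add: M2eq matrix_vector_mult_add_rdistrib scaleR_mv RZ)
    hence "M1 *v y = M1 *v (G *v (X2 *v z))" by (simp add: y_def)
    moreover have "M2 *v y' = X2 *v (G *v (M1 *v z))" using oz2
      by (simp add: M2eq matrix_vector_mult_add_rdistrib scaleR_mv RZ y'_def)
    ultimately show ?thesis using comm[OF rM1 rX2] by simp
  qed
  have A: "(M0 *v y)$k = (M2 *v z)$k" "(M0 *v y')$k = (M1 *v z)$k" "(M1 *v y)$k = (M2 *v y')$k" for k
    using ea eb ec by simp_all
  note E = A[of 0, unfolded M0_def M1_def M2_def Mx_mv]
    A[of 1, unfolded M0_def M1_def M2_def Mx_mv]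
    A[of 2, unfolded M0_def M1_def M2_def Mx_mv]
    A[of 3, unfolded M0_def M1_def M2_def Mx_mv]
  have Dsq: "- ((d0*(e1*g2 - g1*e2) - e0*(d1*g2 - g1*d2) + g0*(d1*e2 - e1*d2))^2) \<noteq> 0"
    using Del by simp
  have "blkdet g0 e0 d0 g0 g1 e1 d1 g1 g2 e2 d2 g2 * z$0 = 0 \<and>
        blkdet g0 e0 d0 g0 g1 e1 d1 g1 g2 e2 d2 g2 * z$1 = 0"
    by (rule blk[of g0 "y$0" e0 "y$1" g2 "z$0" e2 "z$1" d0 g0 d2 g2 "y'$0" "y'$1" g1 e1 d1 g1])
       (use E in simp_all)
  hence z01: "z$0 = 0" "z$1 = 0" using Dsq unfolding blkdet_N by simp_all
  have "(g0^2 - d0*e0) * y$0 = 0" "(g0^2 - d0*e0) * y$1 = 0"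
    using E(7,10) z01 by (simp_all, algebra, algebra)
  hence y01: "y$0 = 0" "y$1 = 0" using del by simp_all
  have "(g0^2 - d0*e0) * y'$0 = 0" "(g0^2 - d0*e0) * y'$1 = 0"
    using E(8,11) z01 by (simp_all, algebra, algebra)
  hence y'01: "y'$0 = 0" "y'$1 = 0" using del by simp_all
  have "blkdet g0 d0 e0 g0 g1 d1 e1 g1 g2 d2 e2 g2 * z$2 = 0 \<and>
        blkdet g0 d0 e0 g0 g1 d1 e1 g1 g2 d2 e2 g2 * z$3 = 0"
    by (rule blk[of g0 "y$2" d0 "y$3" g2 "z$2" d2 "z$3" e0 g0 e2 g2 "y'$2" "y'$3" g1 d1 e1 g1])
       (use E z01 y01 y'01 in simp_all)
  hence z23: "z$2 = 0" "z$3 = 0" using Dsq unfolding blkdet_N' by simp_all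
  have "z = 0" using z01 z23 by (simp add: vec_eq_iff forall4)
  thus False using z0 by simp
qed



lemma Mx_add: "Mx a1 a2 a3 a4 a5 a6 + Mx b1 b2 b3 b4 b5 b6 =
    Mx (a1+b1) (a2+b2) (a3+b3) (a4+b4) (a5+b5) (a6+b6)"
  by (simp add: Mx_def vec_eq_iff forall4)

lemma Mx_diff: "Mx a1 a2 a3 a4 a5 a6 - Mx b1 b2 b3 b4 b5 b6 =
    Mx (a1-b1) (a2-b2) (a3-b3) (a4-b4) (a5-b5) (a6-b6)"
  by (simp add: Mx_def vec_eq_iff forall4)

lemma Mx_scale: "c *\<^sub>R Mx a1 a2 a3 a4 a5 a6 = Mx (c*a1) (c*a2) (c*a3) (c*a4) (c*a5) (c*a6)"
  by (simp add: Mx_def vec_eq_iff forall4)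

lemma Mx_entries [simp]: "(Mx d e g s1 s2 s3)$0$0 = s1" "(Mx d e g s1 s2 s3)$1$1 = s2"
  "(Mx d e g s1 s2 s3)$0$1 = s3"
  by (simp_all add: Mx_def)

definition E :: "nat \<Rightarrow> tensor2" where
  "E k = (if k = 1 then Mx 0 0 0 1 0 0 else if k = 2 then Mx 0 0 0 0 1 0
     else if k = 3 then Mx 0 0 0 0 0 1 else if k = 4 then Mx 1 0 0 0 0 0
     else if k = 5 then Mx 0 1 0 0 0 0 else Mx 0 0 1 0 0 0)"

lemma rep_add: "rep R I x \<Longrightarrow> rep R I y \<Longrightarrow> rep R I (x + y)"
proof -
  assume "rep R I x" "rep R I y"
  then obtain f g where f: "x = (\<Sum>i\<in>I. f i *\<^sub>R R i)" and g: "y = (\<Sum>i\<in>I. g i *\<^sub>R R i)"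
    unfolding rep_def by blast
  have "x + y = (\<Sum>i\<in>I. (f i + g i) *\<^sub>R R i)" unfolding f g by (simp add: scaleR_add_left sum.distrib)
  thus ?thesis unfolding rep_def by (intro exI[of _ "\<lambda>i. f i + g i"])
qed

lemma rep_scale: "rep R I x \<Longrightarrow> rep R I (c *\<^sub>R x)"
proof -
  assume "rep R I x"
  then obtain f where f: "x = (\<Sum>i\<in>I. f i *\<^sub>R R i)" unfolding rep_def by blast
  have "c *\<^sub>R x = (\<Sum>i\<in>I. (c * f i) *\<^sub>R R i)" unfolding f by (simp add: scaleR_sum_right)
  thus ?thesis unfolding rep_def by (intro exI[of _ "\<lambda>i. c * f i"])
qed

lemma rep_zero: "rep R I 0"
  unfolding rep_def by (rule exI[of _ "\<lambda>_. 0"]) simp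

lemma rep_base: assumes "finite I" "i \<in> I" shows "rep R I (R i)"
proof -
  have "(\<Sum>j\<in>I. (if j = i then 1 else 0) *\<^sub>R R j) = (\<Sum>j\<in>I. if j = i then R j else 0)"
    by (rule sum.cong) auto
  also have "\<dots> = R i" using assms by (simp add: sum.delta)
  finally show ?thesis unfolding rep_def by metis
qed

lemma span_rep: assumes fin: "finite I" and M: "M \<in> span (R ` I)" shows "rep R I M"
proof -
  have "subspace {M. rep R I M}"
    unfolding subspace_def using rep_zero rep_add rep_scale by blast
  moreover have "R ` I \<subseteq> {M. rep R I M}" using rep_base[OF fin] by blast
  ultimately have "span (R ` I) \<subseteq> {M. rep R I M}" by (rule span_minimal[rotated])
  thus ?thesis using M by blast
qed

lemma rep_split:
  assumes fin: "finite I" and i0: "i0 \<in> I" and r: "rep R I M"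
  shows "\<exists>lam. rep R (I - {i0}) (M - lam *\<^sub>R R i0)"
proof -
  obtain f where f: "M = (\<Sum>i\<in>I. f i *\<^sub>R R i)" using r unfolding rep_def by blast
  have "M = f i0 *\<^sub>R R i0 + (\<Sum>i\<in>I-{i0}. f i *\<^sub>R R i)" unfolding f by (rule sum.remove[OF fin i0])
  hence "M - f i0 *\<^sub>R R i0 = (\<Sum>i\<in>I-{i0}. f i *\<^sub>R R i)" by simp
  thus ?thesis unfolding rep_def by blast
qed

lemma subst_step:
  assumes fin: "finite I" and r0: "rep R I M0" and nz: "M0 \<noteq> 0" and rG: "\<forall>k\<in>K. rep R I (G k)"
  shows "\<exists>i\<in>I. \<exists>c. \<forall>k\<in>K. rep R (I - {i}) (G k - c k *\<^sub>R M0)"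
proof -
  obtain a where a: "M0 = (\<Sum>i\<in>I. a i *\<^sub>R R i)" using r0 rep_def by blast
  obtain i where i: "i \<in> I" "a i \<noteq> 0"
  proof (rule ccontr)
    assume "\<not> thesis"
    hence "\<forall>i\<in>I. a i = 0" using that by blast
    hence "M0 = 0" unfolding a by simp
    thus False using nz by simp
  qed
  from rG have "\<forall>k\<in>K. \<exists>f. G k = (\<Sum>j\<in>I. f j *\<^sub>R R j)" unfolding rep_def by blast
  then obtain F where F: "\<forall>k\<in>K. G k = (\<Sum>j\<in>I. F k j *\<^sub>R R j)" by (metis bchoice)
  define c where "c k = F k i / a i" for k
  have "rep R (I - {i}) (G k - c k *\<^sub>R M0)" if k: "k \<in> K" for k
  proof -
    have "G k - c k *\<^sub>R M0 = (\<Sum>j\<in>I. (F k j - c k * a j) *\<^sub>R R j)"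
      using F k unfolding a by (simp add: scaleR_sum_right scaleR_left_diff_distrib sum_subtractf)
    also have "\<dots> = (F k i - c k * a i) *\<^sub>R R i + (\<Sum>j\<in>I-{i}. (F k j - c k * a j) *\<^sub>R R j)"
      by (rule sum.remove[OF fin i(1)])
    also have "F k i - c k * a i = 0" using i(2) by (simp add: c_def)
    finally show ?thesis unfolding rep_def by auto
  qed
  thus ?thesis using i(1) by blast
qed

lemma comb_vec:
  fixes A B C Q :: "'a::real_vector"
  shows "t4 *\<^sub>R (A - l4 *\<^sub>R Q) + t5 *\<^sub>R (B - l5 *\<^sub>R Q) + t6 *\<^sub>R (C - l6 *\<^sub>R Q) =
    (t4 *\<^sub>R A + t5 *\<^sub>R B + t6 *\<^sub>R C) - (t4*l4 + t5*l5 + t6*l6) *\<^sub>R Q"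
  by (simp add: algebra_simps)

lemma comb_rep:
  assumes r4: "rep R J (Mx 1 0 0 a1 a2 a3 - l4 *\<^sub>R R i0)"
    and r5: "rep R J (Mx 0 1 0 b1 b2 b3 - l5 *\<^sub>R R i0)"
    and r6: "rep R J (Mx 0 0 1 c1 c2 c3 - l6 *\<^sub>R R i0)"
    and t: "t4*l4 + t5*l5 + t6*l6 = 0"
  shows "rep R J (Mx t4 t5 t6 (t4*a1+t5*b1+t6*c1) (t4*a2+t5*b2+t6*c2) (t4*a3+t5*b3+t6*c3))"
proof -
  have "rep R J (t4 *\<^sub>R (Mx 1 0 0 a1 a2 a3 - l4 *\<^sub>R R i0) + t5 *\<^sub>R (Mx 0 1 0 b1 b2 b3 - l5 *\<^sub>R R i0)
      + t6 *\<^sub>R (Mx 0 0 1 c1 c2 c3 - l6 *\<^sub>R R i0))"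
    by (intro rep_add rep_scale r4 r5 r6)
  also have "t4 *\<^sub>R (Mx 1 0 0 a1 a2 a3 - l4 *\<^sub>R R i0) + t5 *\<^sub>R (Mx 0 1 0 b1 b2 b3 - l5 *\<^sub>R R i0)
      + t6 *\<^sub>R (Mx 0 0 1 c1 c2 c3 - l6 *\<^sub>R R i0) =
      (t4 *\<^sub>R Mx 1 0 0 a1 a2 a3 + t5 *\<^sub>R Mx 0 1 0 b1 b2 b3 + t6 *\<^sub>R Mx 0 0 1 c1 c2 c3)
      - (t4*l4 + t5*l5 + t6*l6) *\<^sub>R R i0"
    by (rule comb_vec)
  also have "\<dots> = Mx t4 t5 t6 (t4*a1+t5*b1+t6*c1) (t4*a2+t5*b2+t6*c2) (t4*a3+t5*b3+t6*c3)"
    using t by (simp add: Mx_scale Mx_add)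
  finally show ?thesis .
qed

lemma lower8:
  fixes u v :: "nat \<Rightarrow> real^4"
  assumes A: "\<forall>k\<in>{1..6::nat}. E k \<in> span ((\<lambda>i. outer2 (u i) (v i)) ` {..<8})"
  shows False
proof -
  define R where "R i = outer2 (u i) (v i)" for i
  have Ruv: "\<forall>i. R i = outer2 (u i) (v i)" by (simp add: R_def)
  have img: "(\<lambda>i. outer2 (u i) (v i)) ` {..<8} = R ` {..<8}" by (simp add: R_def)
  have r: "\<forall>k\<in>{1..6}. rep R {..<8} (E k)"
    using span_rep[of "{..<8::nat}" _ R] A img by auto
  have E1nz: "E 1 \<noteq> 0"
  proof
    assume "E 1 = 0" hence "(E 1)$0$0 = 0" by simp
    thus False by (simp add: E_def)
  qed
  have r1: "rep R {..<8} (E 1)" "\<forall>k\<in>{2..6}. rep R {..<8} (E k)" using r by auto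
  obtain i1 c1 where i1: "i1 \<in> {..<8::nat}"
      and c1: "\<forall>k\<in>{2..6}. rep R ({..<8} - {i1}) (E k - c1 k *\<^sub>R E 1)"
    using subst_step[OF _ r1(1) E1nz r1(2)] by blast
  define I1 where "I1 = {..<8::nat} - {i1}"
  define G2 where "G2 k = E k - c1 k *\<^sub>R E 1" for k
  have G2nz: "G2 2 \<noteq> 0"
  proof
    assume "G2 2 = 0" hence "(G2 2)$1$1 = 0" by simp
    thus False by (simp add: G2_def E_def)
  qed
  have r2: "rep R I1 (G2 2)" "\<forall>k\<in>{3..6}. rep R I1 (G2 k)" using c1 by (auto simp: I1_def G2_def)
  obtain i2 c2 where i2: "i2 \<in> I1"
      and c2: "\<forall>k\<in>{3..6}. rep R (I1 - {i2}) (G2 k - c2 k *\<^sub>R G2 2)"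
    using subst_step[OF _ r2(1) G2nz r2(2)] by (auto simp: I1_def)
  define I2 where "I2 = I1 - {i2}"
  define G3 where "G3 k = G2 k - c2 k *\<^sub>R G2 2" for k
  have G3nz: "G3 3 \<noteq> 0"
  proof
    assume "G3 3 = 0" hence "(G3 3)$0$1 = 0" by simp
    thus False by (simp add: G3_def G2_def E_def)
  qed
  have r3: "rep R I2 (G3 3)" "\<forall>k\<in>{4..6}. rep R I2 (G3 k)" using c2 by (auto simp: I2_def G3_def)
  obtain i3 c3 where i3: "i3 \<in> I2"
      and c3: "\<forall>k\<in>{4..6}. rep R (I2 - {i3}) (G3 k - c3 k *\<^sub>R G3 3)"
    using subst_step[OF _ r3(1) G3nz r3(2)] by (auto simp: I2_def I1_def)
  define I3 where "I3 = I2 - {i3}"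
  define W where "W k = G3 k - c3 k *\<^sub>R G3 3" for k
  have rW: "rep R I3 (W 4)" "rep R I3 (W 5)" "rep R I3 (W 6)" using c3 by (auto simp: I3_def W_def)
  have finI3: "finite I3" by (simp add: I3_def I2_def I1_def)
  have cI3: "card I3 = 5"
    using i1 i2 i3 by (simp add: I3_def I2_def I1_def card_Diff_singleton)
  then obtain i0 where i0: "i0 \<in> I3" by (metis card.empty ex_in_conv zero_neq_numeral)
  define J where "J = I3 - {i0}"
  have finJ: "finite J" using finI3 by (simp add: J_def)
  have cJ: "card J \<le> 4" using cI3 i0 by (simp add: J_def card_Diff_singleton)
  have W4: "W 4 = Mx 1 0 0 ((W 4)$0$0) ((W 4)$1$1) ((W 4)$0$1)"
    by (simp add: W_def G3_def G2_def E_def Mx_diff Mx_scale)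
  have W5: "W 5 = Mx 0 1 0 ((W 5)$0$0) ((W 5)$1$1) ((W 5)$0$1)"
    by (simp add: W_def G3_def G2_def E_def Mx_diff Mx_scale)
  have W6: "W 6 = Mx 0 0 1 ((W 6)$0$0) ((W 6)$1$1) ((W 6)$0$1)"
    by (simp add: W_def G3_def G2_def E_def Mx_diff Mx_scale)
  obtain l4 where l4: "rep R J (W 4 - l4 *\<^sub>R R i0)" using rep_split[OF finI3 i0 rW(1)] J_def by blast
  obtain l5 where l5: "rep R J (W 5 - l5 *\<^sub>R R i0)" using rep_split[OF finI3 i0 rW(2)] J_def by blast
  obtain l6 where l6: "rep R J (W 6 - l6 *\<^sub>R R i0)" using rep_split[OF finI3 i0 rW(3)] J_def by blast
  define a1 a2 a3 where "a1 = (W 4)$0$0" "a2 = (W 4)$1$1" "a3 = (W 4)$0$1"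
  define b1 b2 b3 where "b1 = (W 5)$0$0" "b2 = (W 5)$1$1" "b3 = (W 5)$0$1"
  define e1 e2 e3 where "e1 = (W 6)$0$0" "e2 = (W 6)$1$1" "e3 = (W 6)$0$1"
  have R4: "rep R J (Mx 1 0 0 a1 a2 a3 - l4 *\<^sub>R R i0)" using l4 W4 a1_a2_a3_def by simp
  have R5: "rep R J (Mx 0 1 0 b1 b2 b3 - l5 *\<^sub>R R i0)" using l5 W5 b1_b2_b3_def by simp
  have R6: "rep R J (Mx 0 0 1 e1 e2 e3 - l6 *\<^sub>R R i0)" using l6 W6 e1_e2_e3_def by simp
  note cr = comb_rep[OF R4 R5 R6]
  show False
  proof (cases "l4 = 0")
    case False
    have c1: "(-l6)*l4 + 0*l5 + l4*l6 = 0" by simp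
    have c2: "(-l5)*l4 + l4*l5 + 0*l6 = 0" by simp
    have d1: "l4^2 - (-l6)*0 \<noteq> 0" using False by simp
    have d2: "(-l6)*(l4*0 - 0*0) - 0*((-l5)*0 - 0*1) + l4*((-l5)*0 - l4*1) \<noteq> 0" using False by simp
    show False by (rule core[OF Ruv finJ cJ cr[OF c1] cr[OF c2] R4 d1 d2])
  next
    case l40: True
    show False
    proof (cases "l5 = 0")
      case False
      have c1: "0*l4 + (-l6)*l5 + l5*l6 = 0" by simp
      have c2: "1*l4 + 0*l5 + 0*l6 = 0" using l40 by simp
      have d1: "l5^2 - 0*(-l6) \<noteq> 0" using False by simp
      have d2: "0*(0*0 - 0*1) - (-l6)*(1*0 - 0*0) + l5*(1*1 - 0*0) \<noteq> 0" using False by simp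
      show False by (rule core[OF Ruv finJ cJ cr[OF c1] cr[OF c2] R5 d1 d2])
    next
      case True
      have c1: "1*l4 + 1*l5 + 0*l6 = 0" using l40 True by simp
      have c2: "1*l4 + (-1)*l5 + 0*l6 = 0" using l40 True by simp
      have d1: "(0::real)^2 - 1*1 \<noteq> 0" by simp
      have d2: "(1::real)*((-1)*1 - 0*0) - 1*(1*1 - 0*0) + 0*(1*0 - (-1)*0) \<noteq> 0" by simp
      show False by (rule core[OF Ruv finJ cJ cr[OF c1] cr[OF c2] R6 d1 d2])
    qed
  qed
qed



definition vec4 :: "real \<Rightarrow> real \<Rightarrow> real \<Rightarrow> real \<Rightarrow> real^4" where
  "vec4 a b c d = (\<chi> i. if i = 0 then a else if i = 1 then b else if i = 2 then c else d)"

lemma vec4_comp[simp]: "vec4 a b c d $ 0 = a" "vec4 a b c d $ 1 = b" "vec4 a b c d $ 2 = c"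
  "vec4 a b c d $ 3 = d"
  by (simp_all add: vec4_def)

lemma sym_sw:
  assumes "symmetric4 T"
  shows "T$a$b$c$d = T$b$a$c$d" "T$a$b$c$d = T$a$c$b$d" "T$a$b$c$d = T$a$b$d$c"
proof -
  define k where "k n = (if n = 0 then a else if n = 1 then b else if n = (2::nat) then c else d)" for n
  have P: "\<And>x y. x < 4 \<Longrightarrow> y < 4 \<Longrightarrow> Transposition.transpose x y permutes {0..<4::nat}"
    by (rule permutes_swap_id) auto
  have "entry4 T (k \<circ> Transposition.transpose 0 1) = entry4 T k" using assms P[of 0 1] unfolding symmetric4_def by simp
  thus "T$a$b$c$d = T$b$a$c$d" by (simp add: entry4_def k_def)
  have "entry4 T (k \<circ> Transposition.transpose 1 2) = entry4 T k" using assms P[of 1 2] unfolding symmetric4_def by simp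
  thus "T$a$b$c$d = T$a$c$b$d" by (simp add: entry4_def k_def)
  have "entry4 T (k \<circ> Transposition.transpose 2 3) = entry4 T k" using assms P[of 2 3] unfolding symmetric4_def by simp
  thus "T$a$b$c$d = T$a$b$d$c" by (simp add: entry4_def k_def)
qed


definition sq :: "nat \<Rightarrow> real^4" where
  "sq i = [vec4 1 0 0 0, vec4 0 1 0 0, vec4 1 1 0 0, vec4 1 0 0 1, vec4 1 0 0 (-1),
           vec4 0 1 1 0, vec4 0 1 (-1) 0, vec4 1 1 1 1, vec4 1 (-1) 1 (-1)] ! i"

lemma Mx_span: "Mx d e g s1 s2 s3 \<in> span ((\<lambda>i. outer2 (sq i) (sq i)) ` {..<9})"
proof -
  define Q where "Q i = outer2 (sq i) (sq i)" for i
  have Q: "Q i \<in> span (Q ` {..<9})" if "i < 9" for i using that by (intro span_base) auto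
  have eq: "Mx d e g s1 s2 s3 = (s1 - s3) *\<^sub>R Q 0 + (s2 - s3) *\<^sub>R Q 1 + s3 *\<^sub>R Q 2
     + ((d - g)/2) *\<^sub>R Q 3 + ((-d - g)/2) *\<^sub>R Q 4 + ((e - g)/2) *\<^sub>R Q 5
     + ((-e-g)/2) *\<^sub>R Q 6 + (g/2) *\<^sub>R Q 7 + (g/2) *\<^sub>R Q 8"
    by (simp add: vec_eq_iff forall4 Mx_def outer2_def sq_def Q_def field_simps)
  have "Mx d e g s1 s2 s3 \<in> span (Q ` {..<9})"
    unfolding eq by (intro span_add span_scale Q) auto
  thus ?thesis by (simp add: Q_def)
qed

lemma outer2_scale: "c *\<^sub>R outer2 a b = outer2 (c *\<^sub>R a) b"
  by (simp add: outer2_def vec_eq_iff)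

theorem proposition3p6:
  fixes T :: tensor4
  assumes "symmetric4 T"
    and "\<forall>x :: real^4. tensor_poly4 T x =
           (x$0)^4 - 3 * (x$1)^4 + 12 * (x$0)^2 * (x$1) * (x$2) + 12 * (x$0) * (x$1)^2 * (x$3)"
  shows "drk2 T = 9 \<and> sdrk2 T = 9"
proof -
  note sw = sym_sw[OF assms(1)]
  have hP: "\<And>x. tensor_poly4 T x =
           (x$0)^4 - 3 * (x$1)^4 + 12 * (x$0)^2 * (x$1) * (x$2) + 12 * (x$0) * (x$1)^2 * (x$3)"
    using assms(2) by blast
  have eq0: "1 * T$0$0$0$0 = 1"
    using hP[of "vec4 1 0 0 0"] by (simp add: tensor_poly4_def sum4 sw, linarith?)
  have eq1: "1 * T$1$1$1$1 = (-3)"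
    using hP[of "vec4 0 1 0 0"] by (simp add: tensor_poly4_def sum4 sw, linarith?)
  have eq2: "1 * T$2$2$2$2 = 0"
    using hP[of "vec4 0 0 1 0"] by (simp add: tensor_poly4_def sum4 sw, linarith?)
  have eq3: "1 * T$3$3$3$3 = 0"
    using hP[of "vec4 0 0 0 1"] by (simp add: tensor_poly4_def sum4 sw, linarith?)
  have eq4: "1 * T$0$0$0$0 + 4 * T$0$0$0$1 + 6 * T$0$0$1$1 + 4 * T$0$1$1$1 + 1 * T$1$1$1$1 = (-2)"
    using hP[of "vec4 1 1 0 0"] by (simp add: tensor_poly4_def sum4 sw, linarith?)
  have eq5: "1 * T$0$0$0$0 + (-4) * T$0$0$0$1 + 6 * T$0$0$1$1 + (-4) * T$0$1$1$1 + 1 * T$1$1$1$1 = (-2)"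
    using hP[of "vec4 1 (-1) 0 0"] by (simp add: tensor_poly4_def sum4 sw, linarith?)
  have eq6: "1 * T$0$0$0$0 + 8 * T$0$0$0$1 + 24 * T$0$0$1$1 + 32 * T$0$1$1$1 + 16 * T$1$1$1$1 = (-47)"
    using hP[of "vec4 1 2 0 0"] by (simp add: tensor_poly4_def sum4 sw, linarith?)
  have eq7: "1 * T$0$0$0$0 + 4 * T$0$0$0$2 + 6 * T$0$0$2$2 + 4 * T$0$2$2$2 + 1 * T$2$2$2$2 = 1"
    using hP[of "vec4 1 0 1 0"] by (simp add: tensor_poly4_def sum4 sw, linarith?)
  have eq8: "1 * T$0$0$0$0 + (-4) * T$0$0$0$2 + 6 * T$0$0$2$2 + (-4) * T$0$2$2$2 + 1 * T$2$2$2$2 = 1"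
    using hP[of "vec4 1 0 (-1) 0"] by (simp add: tensor_poly4_def sum4 sw, linarith?)
  have eq9: "1 * T$0$0$0$0 + 8 * T$0$0$0$2 + 24 * T$0$0$2$2 + 32 * T$0$2$2$2 + 16 * T$2$2$2$2 = 1"
    using hP[of "vec4 1 0 2 0"] by (simp add: tensor_poly4_def sum4 sw, linarith?)
  have eq10: "1 * T$0$0$0$0 + 4 * T$0$0$0$3 + 6 * T$0$0$3$3 + 4 * T$0$3$3$3 + 1 * T$3$3$3$3 = 1"
    using hP[of "vec4 1 0 0 1"] by (simp add: tensor_poly4_def sum4 sw, linarith?)
  have eq11: "1 * T$0$0$0$0 + (-4) * T$0$0$0$3 + 6 * T$0$0$3$3 + (-4) * T$0$3$3$3 + 1 * T$3$3$3$3 = 1"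
    using hP[of "vec4 1 0 0 (-1)"] by (simp add: tensor_poly4_def sum4 sw, linarith?)
  have eq12: "1 * T$0$0$0$0 + 8 * T$0$0$0$3 + 24 * T$0$0$3$3 + 32 * T$0$3$3$3 + 16 * T$3$3$3$3 = 1"
    using hP[of "vec4 1 0 0 2"] by (simp add: tensor_poly4_def sum4 sw, linarith?)
  have eq13: "1 * T$1$1$1$1 + 4 * T$1$1$1$2 + 6 * T$1$1$2$2 + 4 * T$1$2$2$2 + 1 * T$2$2$2$2 = (-3)"
    using hP[of "vec4 0 1 1 0"] by (simp add: tensor_poly4_def sum4 sw, linarith?)
  have eq14: "1 * T$1$1$1$1 + (-4) * T$1$1$1$2 + 6 * T$1$1$2$2 + (-4) * T$1$2$2$2 + 1 * T$2$2$2$2 = (-3)"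
    using hP[of "vec4 0 1 (-1) 0"] by (simp add: tensor_poly4_def sum4 sw, linarith?)
  have eq15: "1 * T$1$1$1$1 + 8 * T$1$1$1$2 + 24 * T$1$1$2$2 + 32 * T$1$2$2$2 + 16 * T$2$2$2$2 = (-3)"
    using hP[of "vec4 0 1 2 0"] by (simp add: tensor_poly4_def sum4 sw, linarith?)
  have eq16: "1 * T$1$1$1$1 + 4 * T$1$1$1$3 + 6 * T$1$1$3$3 + 4 * T$1$3$3$3 + 1 * T$3$3$3$3 = (-3)"
    using hP[of "vec4 0 1 0 1"] by (simp add: tensor_poly4_def sum4 sw, linarith?)
  have eq17: "1 * T$1$1$1$1 + (-4) * T$1$1$1$3 + 6 * T$1$1$3$3 + (-4) * T$1$3$3$3 + 1 * T$3$3$3$3 = (-3)"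
    using hP[of "vec4 0 1 0 (-1)"] by (simp add: tensor_poly4_def sum4 sw, linarith?)
  have eq18: "1 * T$1$1$1$1 + 8 * T$1$1$1$3 + 24 * T$1$1$3$3 + 32 * T$1$3$3$3 + 16 * T$3$3$3$3 = (-3)"
    using hP[of "vec4 0 1 0 2"] by (simp add: tensor_poly4_def sum4 sw, linarith?)
  have eq19: "1 * T$2$2$2$2 + 4 * T$2$2$2$3 + 6 * T$2$2$3$3 + 4 * T$2$3$3$3 + 1 * T$3$3$3$3 = 0"
    using hP[of "vec4 0 0 1 1"] by (simp add: tensor_poly4_def sum4 sw, linarith?)
  have eq20: "1 * T$2$2$2$2 + (-4) * T$2$2$2$3 + 6 * T$2$2$3$3 + (-4) * T$2$3$3$3 + 1 * T$3$3$3$3 = 0"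
    using hP[of "vec4 0 0 1 (-1)"] by (simp add: tensor_poly4_def sum4 sw, linarith?)
  have eq21: "1 * T$2$2$2$2 + 8 * T$2$2$2$3 + 24 * T$2$2$3$3 + 32 * T$2$3$3$3 + 16 * T$3$3$3$3 = 0"
    using hP[of "vec4 0 0 1 2"] by (simp add: tensor_poly4_def sum4 sw, linarith?)
  have eq22: "1 * T$0$0$0$0 + 4 * T$0$0$0$1 + 4 * T$0$0$0$2 + 6 * T$0$0$1$1 + 12 * T$0$0$1$2 + 6 * T$0$0$2$2 + 4 * T$0$1$1$1 + 12 * T$0$1$1$2 + 12 * T$0$1$2$2 + 4 * T$0$2$2$2 + 1 * T$1$1$1$1 + 4 * T$1$1$1$2 + 6 * T$1$1$2$2 + 4 * T$1$2$2$2 + 1 * T$2$2$2$2 = 10"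
    using hP[of "vec4 1 1 1 0"] by (simp add: tensor_poly4_def sum4 sw, linarith?)
  have eq23: "1 * T$0$0$0$0 + (-4) * T$0$0$0$1 + 4 * T$0$0$0$2 + 6 * T$0$0$1$1 + (-12) * T$0$0$1$2 + 6 * T$0$0$2$2 + (-4) * T$0$1$1$1 + 12 * T$0$1$1$2 + (-12) * T$0$1$2$2 + 4 * T$0$2$2$2 + 1 * T$1$1$1$1 + (-4) * T$1$1$1$2 + 6 * T$1$1$2$2 + (-4) * T$1$2$2$2 + 1 * T$2$2$2$2 = (-14)"
    using hP[of "vec4 1 (-1) 1 0"] by (simp add: tensor_poly4_def sum4 sw, linarith?)
  have eq24: "1 * T$0$0$0$0 + 4 * T$0$0$0$1 + (-4) * T$0$0$0$2 + 6 * T$0$0$1$1 + (-12) * T$0$0$1$2 + 6 * T$0$0$2$2 + 4 * T$0$1$1$1 + (-12) * T$0$1$1$2 + 12 * T$0$1$2$2 + (-4) * T$0$2$2$2 + 1 * T$1$1$1$1 + (-4) * T$1$1$1$2 + 6 * T$1$1$2$2 + (-4) * T$1$2$2$2 + 1 * T$2$2$2$2 = (-14)"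
    using hP[of "vec4 1 1 (-1) 0"] by (simp add: tensor_poly4_def sum4 sw, linarith?)
  have eq25: "1 * T$0$0$0$0 + 4 * T$0$0$0$1 + 4 * T$0$0$0$3 + 6 * T$0$0$1$1 + 12 * T$0$0$1$3 + 6 * T$0$0$3$3 + 4 * T$0$1$1$1 + 12 * T$0$1$1$3 + 12 * T$0$1$3$3 + 4 * T$0$3$3$3 + 1 * T$1$1$1$1 + 4 * T$1$1$1$3 + 6 * T$1$1$3$3 + 4 * T$1$3$3$3 + 1 * T$3$3$3$3 = 10"
    using hP[of "vec4 1 1 0 1"] by (simp add: tensor_poly4_def sum4 sw, linarith?)
  have eq26: "1 * T$0$0$0$0 + (-4) * T$0$0$0$1 + 4 * T$0$0$0$3 + 6 * T$0$0$1$1 + (-12) * T$0$0$1$3 + 6 * T$0$0$3$3 + (-4) * T$0$1$1$1 + 12 * T$0$1$1$3 + (-12) * T$0$1$3$3 + 4 * T$0$3$3$3 + 1 * T$1$1$1$1 + (-4) * T$1$1$1$3 + 6 * T$1$1$3$3 + (-4) * T$1$3$3$3 + 1 * T$3$3$3$3 = 10"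
    using hP[of "vec4 1 (-1) 0 1"] by (simp add: tensor_poly4_def sum4 sw, linarith?)
  have eq27: "1 * T$0$0$0$0 + 4 * T$0$0$0$1 + (-4) * T$0$0$0$3 + 6 * T$0$0$1$1 + (-12) * T$0$0$1$3 + 6 * T$0$0$3$3 + 4 * T$0$1$1$1 + (-12) * T$0$1$1$3 + 12 * T$0$1$3$3 + (-4) * T$0$3$3$3 + 1 * T$1$1$1$1 + (-4) * T$1$1$1$3 + 6 * T$1$1$3$3 + (-4) * T$1$3$3$3 + 1 * T$3$3$3$3 = (-14)"
    using hP[of "vec4 1 1 0 (-1)"] by (simp add: tensor_poly4_def sum4 sw, linarith?)
  have eq28: "1 * T$0$0$0$0 + 4 * T$0$0$0$2 + 4 * T$0$0$0$3 + 6 * T$0$0$2$2 + 12 * T$0$0$2$3 + 6 * T$0$0$3$3 + 4 * T$0$2$2$2 + 12 * T$0$2$2$3 + 12 * T$0$2$3$3 + 4 * T$0$3$3$3 + 1 * T$2$2$2$2 + 4 * T$2$2$2$3 + 6 * T$2$2$3$3 + 4 * T$2$3$3$3 + 1 * T$3$3$3$3 = 1"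
    using hP[of "vec4 1 0 1 1"] by (simp add: tensor_poly4_def sum4 sw, linarith?)
  have eq29: "1 * T$0$0$0$0 + (-4) * T$0$0$0$2 + 4 * T$0$0$0$3 + 6 * T$0$0$2$2 + (-12) * T$0$0$2$3 + 6 * T$0$0$3$3 + (-4) * T$0$2$2$2 + 12 * T$0$2$2$3 + (-12) * T$0$2$3$3 + 4 * T$0$3$3$3 + 1 * T$2$2$2$2 + (-4) * T$2$2$2$3 + 6 * T$2$2$3$3 + (-4) * T$2$3$3$3 + 1 * T$3$3$3$3 = 1"
    using hP[of "vec4 1 0 (-1) 1"] by (simp add: tensor_poly4_def sum4 sw, linarith?)
  have eq30: "1 * T$0$0$0$0 + 4 * T$0$0$0$2 + (-4) * T$0$0$0$3 + 6 * T$0$0$2$2 + (-12) * T$0$0$2$3 + 6 * T$0$0$3$3 + 4 * T$0$2$2$2 + (-12) * T$0$2$2$3 + 12 * T$0$2$3$3 + (-4) * T$0$3$3$3 + 1 * T$2$2$2$2 + (-4) * T$2$2$2$3 + 6 * T$2$2$3$3 + (-4) * T$2$3$3$3 + 1 * T$3$3$3$3 = 1"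
    using hP[of "vec4 1 0 1 (-1)"] by (simp add: tensor_poly4_def sum4 sw, linarith?)
  have eq31: "1 * T$1$1$1$1 + 4 * T$1$1$1$2 + 4 * T$1$1$1$3 + 6 * T$1$1$2$2 + 12 * T$1$1$2$3 + 6 * T$1$1$3$3 + 4 * T$1$2$2$2 + 12 * T$1$2$2$3 + 12 * T$1$2$3$3 + 4 * T$1$3$3$3 + 1 * T$2$2$2$2 + 4 * T$2$2$2$3 + 6 * T$2$2$3$3 + 4 * T$2$3$3$3 + 1 * T$3$3$3$3 = (-3)"
    using hP[of "vec4 0 1 1 1"] by (simp add: tensor_poly4_def sum4 sw, linarith?)
  have eq32: "1 * T$1$1$1$1 + (-4) * T$1$1$1$2 + 4 * T$1$1$1$3 + 6 * T$1$1$2$2 + (-12) * T$1$1$2$3 + 6 * T$1$1$3$3 + (-4) * T$1$2$2$2 + 12 * T$1$2$2$3 + (-12) * T$1$2$3$3 + 4 * T$1$3$3$3 + 1 * T$2$2$2$2 + (-4) * T$2$2$2$3 + 6 * T$2$2$3$3 + (-4) * T$2$3$3$3 + 1 * T$3$3$3$3 = (-3)"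
    using hP[of "vec4 0 1 (-1) 1"] by (simp add: tensor_poly4_def sum4 sw, linarith?)
  have eq33: "1 * T$1$1$1$1 + 4 * T$1$1$1$2 + (-4) * T$1$1$1$3 + 6 * T$1$1$2$2 + (-12) * T$1$1$2$3 + 6 * T$1$1$3$3 + 4 * T$1$2$2$2 + (-12) * T$1$2$2$3 + 12 * T$1$2$3$3 + (-4) * T$1$3$3$3 + 1 * T$2$2$2$2 + (-4) * T$2$2$2$3 + 6 * T$2$2$3$3 + (-4) * T$2$3$3$3 + 1 * T$3$3$3$3 = (-3)"
    using hP[of "vec4 0 1 1 (-1)"] by (simp add: tensor_poly4_def sum4 sw, linarith?)
  have eq34: "1 * T$0$0$0$0 + 4 * T$0$0$0$1 + 4 * T$0$0$0$2 + 4 * T$0$0$0$3 + 6 * T$0$0$1$1 + 12 * T$0$0$1$2 + 12 * T$0$0$1$3 + 6 * T$0$0$2$2 + 12 * T$0$0$2$3 + 6 * T$0$0$3$3 + 4 * T$0$1$1$1 + 12 * T$0$1$1$2 + 12 * T$0$1$1$3 + 12 * T$0$1$2$2 + 24 * T$0$1$2$3 + 12 * T$0$1$3$3 + 4 * T$0$2$2$2 + 12 * T$0$2$2$3 + 12 * T$0$2$3$3 + 4 * T$0$3$3$3 + 1 * T$1$1$1$1 + 4 * T$1$1$1$2 + 4 * T$1$1$1$3 + 6 * T$1$1$2$2 + 12 * T$1$1$2$3 + 6 * T$1$1$3$3 + 4 * T$1$2$2$2 + 12 * T$1$2$2$3 + 12 * T$1$2$3$3 + 4 * T$1$3$3$3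 + 1 * T$2$2$2$2 + 4 * T$2$2$2$3 + 6 * T$2$2$3$3 + 4 * T$2$3$3$3 + 1 * T$3$3$3$3 = 22"
    using hP[of "vec4 1 1 1 1"] by (simp add: tensor_poly4_def sum4 sw, linarith?)
  have v0000: "T$0$0$0$0 = 1"
    using eq0 by linarith
  have v1111: "T$1$1$1$1 = (-3)"
    using eq1 by linarith
  have v2222: "T$2$2$2$2 = 0"
    using eq2 by linarith
  have v3333: "T$3$3$3$3 = 0"
    using eq3 by linarith
  have v0001: "T$0$0$0$1 = 0"
    using eq4 eq5 eq6 v0000 v1111 by linarith
  have v0002: "T$0$0$0$2 = 0"
    using eq7 eq8 eq9 v0000 v2222 by linarith
  have v0003: "T$0$0$0$3 = 0"
    using eq10 eq11 eq12 v0000 v3333 by linarith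
  have v0011: "T$0$0$1$1 = 0"
    using eq4 eq5 eq6 v0000 v1111 v0001 by linarith
  have v0022: "T$0$0$2$2 = 0"
    using eq7 eq8 eq9 v0000 v2222 v0002 by linarith
  have v0033: "T$0$0$3$3 = 0"
    using eq10 eq11 eq12 v0000 v3333 v0003 by linarith
  have v0111: "T$0$1$1$1 = 0"
    using eq4 eq5 eq6 v0000 v1111 v0001 v0011 by linarith
  have v0222: "T$0$2$2$2 = 0"
    using eq7 eq8 eq9 v0000 v2222 v0002 v0022 by linarith
  have v0333: "T$0$3$3$3 = 0"
    using eq10 eq11 eq12 v0000 v3333 v0003 v0033 by linarith
  have v1112: "T$1$1$1$2 = 0"
    using eq13 eq14 eq15 v1111 v2222 by linarith
  have v1113: "T$1$1$1$3 = 0"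
    using eq16 eq17 eq18 v1111 v3333 by linarith
  have v1122: "T$1$1$2$2 = 0"
    using eq13 eq14 eq15 v1111 v2222 v1112 by linarith
  have v1133: "T$1$1$3$3 = 0"
    using eq16 eq17 eq18 v1111 v3333 v1113 by linarith
  have v1222: "T$1$2$2$2 = 0"
    using eq13 eq14 eq15 v1111 v2222 v1112 v1122 by linarith
  have v1333: "T$1$3$3$3 = 0"
    using eq16 eq17 eq18 v1111 v3333 v1113 v1133 by linarith
  have v2223: "T$2$2$2$3 = 0"
    using eq19 eq20 eq21 v2222 v3333 by linarith
  have v2233: "T$2$2$3$3 = 0"
    using eq19 eq20 eq21 v2222 v3333 v2223 by linarith
  have v2333: "T$2$3$3$3 = 0"
    using eq19 eq20 eq21 v2222 v3333 v2223 v2233 by linarith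
  have v0012: "T$0$0$1$2 = 1"
    using eq22 eq23 eq24 v0000 v1111 v2222 v0001 v0002 v0011 v0022 v0111 v0222 v1112 v1122 v1222 by linarith
  have v0013: "T$0$0$1$3 = 0"
    using eq25 eq26 eq27 v0000 v1111 v3333 v0001 v0003 v0011 v0033 v0111 v0333 v1113 v1133 v1333 by linarith
  have v0023: "T$0$0$2$3 = 0"
    using eq28 eq29 eq30 v0000 v2222 v3333 v0002 v0003 v0022 v0033 v0222 v0333 v2223 v2233 v2333 by linarith
  have v0112: "T$0$1$1$2 = 0"
    using eq22 eq23 eq24 v0000 v1111 v2222 v0001 v0002 v0011 v0022 v0111 v0222 v1112 v1122 v1222 v0012 by linarith
  have v0113: "T$0$1$1$3 = 1"
    using eq25 eq26 eq27 v0000 v1111 v3333 v0001 v0003 v0011 v0033 v0111 v0333 v1113 v1133 v1333 v0013 by linarith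
  have v0122: "T$0$1$2$2 = 0"
    using eq22 eq23 eq24 v0000 v1111 v2222 v0001 v0002 v0011 v0022 v0111 v0222 v1112 v1122 v1222 v0012 v0112 by linarith
  have v0133: "T$0$1$3$3 = 0"
    using eq25 eq26 eq27 v0000 v1111 v3333 v0001 v0003 v0011 v0033 v0111 v0333 v1113 v1133 v1333 v0013 v0113 by linarith
  have v0223: "T$0$2$2$3 = 0"
    using eq28 eq29 eq30 v0000 v2222 v3333 v0002 v0003 v0022 v0033 v0222 v0333 v2223 v2233 v2333 v0023 by linarith
  have v0233: "T$0$2$3$3 = 0"
    using eq28 eq29 eq30 v0000 v2222 v3333 v0002 v0003 v0022 v0033 v0222 v0333 v2223 v2233 v2333 v0023 v0223 by linarith
  have v1123: "T$1$1$2$3 = 0"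
    using eq31 eq32 eq33 v1111 v2222 v3333 v1112 v1113 v1122 v1133 v1222 v1333 v2223 v2233 v2333 by linarith
  have v1223: "T$1$2$2$3 = 0"
    using eq31 eq32 eq33 v1111 v2222 v3333 v1112 v1113 v1122 v1133 v1222 v1333 v2223 v2233 v2333 v1123 by linarith
  have v1233: "T$1$2$3$3 = 0"
    using eq31 eq32 eq33 v1111 v2222 v3333 v1112 v1113 v1122 v1133 v1222 v1333 v2223 v2233 v2333 v1123 v1223 by linarith
  have v0123: "T$0$1$2$3 = 0"
    using eq34 v0000 v1111 v2222 v3333 v0001 v0002 v0003 v0011 v0022 v0033 v0111 v0222 v0333 v1112 v1113 v1122 v1133 v1222 v1333 v2223 v2233 v2333 v0012 v0013 v0023 v0112 v0113 v0122 v0133 v0223 v0233 v1123 v1223 v1233 by linarith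

  note vals = v0000 v1111 v2222 v3333 v0001 v0002 v0003 v0011 v0022 v0033 v0111 v0222 v0333 v1112 v1113 v1122 v1133 v1222 v1333 v2223 v2233 v2333 v0012 v0013 v0023 v0112 v0113 v0122 v0133 v0223 v0233 v1123 v1223 v1233 v0123
  note vals' = vals[simplified sw]
  have sl: "\<forall>c d. (\<chi> a b. T$a$b$c$d) = Mx (T$0$3$c$d) (T$1$2$c$d) (T$0$2$c$d) (T$0$0$c$d) (T$1$1$c$d) (T$0$1$c$d)"
    by (simp add: forall4 vec_eq_iff Mx_def sw vals')
  have sM: "(\<chi> a b. T$a$b$c$d) = Mx (T$0$3$c$d) (T$1$2$c$d) (T$0$2$c$d) (T$0$0$c$d) (T$1$1$c$d) (T$0$1$c$d)"
    for c d using sl by blast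
  have smem: "(\<chi> a b. T$a$b$c$d) \<in> slice_space2 T" for c d
    unfolding slice_space2_def by (rule span_base) blast
  have sub: "{(\<chi> a b. T$a$b$c$d) | c d. True} \<subseteq> span ((\<lambda>i. outer2 (sq i) (sq i)) ` {..<9})"
  proof
    fix x assume "x \<in> {(\<chi> a b. T$a$b$c$d) | c d. True}"
    then obtain c d where x: "x = (\<chi> a b. T$a$b$c$d)" by blast
    show "x \<in> span ((\<lambda>i. outer2 (sq i) (sq i)) ` {..<9})" unfolding x sM by (rule Mx_span)
  qed
  have up: "slice_space2 T \<subseteq> span ((\<lambda>i. outer2 (sq i) (sq i)) ` {..<9})"
    unfolding slice_space2_def by (rule span_minimal[OF sub subspace_span])
  have s12: "(\<chi> a b. T$a$b$1$2) = Mx 0 0 0 1 0 0" using sM[of 1 2] by (simp add: sw vals')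
  have s03: "(\<chi> a b. T$a$b$0$3) = Mx 0 0 0 0 1 0" using sM[of 0 3] by (simp add: sw vals')
  have s02: "(\<chi> a b. T$a$b$0$2) = Mx 0 0 0 0 0 1" using sM[of 0 2] by (simp add: sw vals')
  have s11: "(\<chi> a b. T$a$b$1$1) = Mx 1 0 0 0 (-3) 0" using sM[of 1 1] by (simp add: sw vals')
  have s00: "(\<chi> a b. T$a$b$0$0) = Mx 0 1 0 1 0 0" using sM[of 0 0] by (simp add: sw vals')
  have s01: "(\<chi> a b. T$a$b$0$1) = Mx 0 0 1 0 0 0" using sM[of 0 1] by (simp add: sw vals')
  have E1: "E 1 \<in> slice_space2 T" using smem[of 1 2] by (simp add: s12 E_def)
  have E2: "E 2 \<in> slice_space2 T" using smem[of 0 3] by (simp add: s03 E_def)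
  have E3: "E 3 \<in> slice_space2 T" using smem[of 0 2] by (simp add: s02 E_def)
  have E6: "E 6 \<in> slice_space2 T" using smem[of 0 1] by (simp add: s01 E_def)
  have "(\<chi> a b. T$a$b$1$1) + 3 *\<^sub>R (\<chi> a b. T$a$b$0$3) \<in> slice_space2 T"
    unfolding slice_space2_def by (intro span_add span_scale smem[unfolded slice_space2_def])
  hence E4: "E 4 \<in> slice_space2 T" by (simp add: s11 s03 E_def Mx_add Mx_scale)
  have "(\<chi> a b. T$a$b$0$0) - (\<chi> a b. T$a$b$1$2) \<in> slice_space2 T"
    unfolding slice_space2_def by (intro span_diff smem[unfolded slice_space2_def])
  hence E5: "E 5 \<in> slice_space2 T" by (simp add: s00 s12 E_def Mx_diff)
  have Ein: "\<forall>k\<in>{1..6::nat}. E k \<in> slice_space2 T"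
  proof
    fix k :: nat assume "k \<in> {1..6}"
    hence "k = 1 \<or> k = 2 \<or> k = 3 \<or> k = 4 \<or> k = 5 \<or> k = 6" by auto
    thus "E k \<in> slice_space2 T" using E1 E2 E3 E4 E5 E6 by auto
  qed
  have notP: "\<not> (slice_space2 T \<subseteq> span ((\<lambda>i. outer2 (u i) (v i)) ` {..<r}))"
    if r9: "r < 9" for r and u v :: "nat \<Rightarrow> real^4"
  proof
    assume h: "slice_space2 T \<subseteq> span ((\<lambda>i. outer2 (u i) (v i)) ` {..<r})"
    have "span ((\<lambda>i. outer2 (u i) (v i)) ` {..<r}) \<subseteq> span ((\<lambda>i. outer2 (u i) (v i)) ` {..<8})"
      by (rule span_mono) (use r9 in auto)
    hence "\<forall>k\<in>{1..6::nat}. E k \<in> span ((\<lambda>i. outer2 (u i) (v i)) ` {..<8})" using Ein h by blast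
    thus False by (rule lower8)
  qed
  have d: "drk2 T = 9"
    unfolding drk2_def
  proof (rule Least_equality)
    show "\<exists>u v :: nat \<Rightarrow> real^4. slice_space2 T \<subseteq> span ((\<lambda>i. outer2 (u i) (v i)) ` {..<9})"
      using up by blast
  next
    fix y assume "\<exists>u v :: nat \<Rightarrow> real^4. slice_space2 T \<subseteq> span ((\<lambda>i. outer2 (u i) (v i)) ` {..<y})"
    then obtain u v :: "nat \<Rightarrow> real^4" where "slice_space2 T \<subseteq> span ((\<lambda>i. outer2 (u i) (v i)) ` {..<y})"
      by blast
    thus "9 \<le> y" using notP[of y u v] by force
  qed
  have s: "sdrk2 T = 9"
    unfolding sdrk2_def
  proof (rule Least_equality)
    show "\<exists>(c :: nat \<Rightarrow> real) (v :: nat \<Rightarrow> real^4).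
        slice_space2 T \<subseteq> span ((\<lambda>i. c i *\<^sub>R outer2 (v i) (v i)) ` {..<9})"
      using up by (intro exI[of _ "\<lambda>_. 1"] exI[of _ sq]) simp
  next
    fix y assume "\<exists>(c :: nat \<Rightarrow> real) (v :: nat \<Rightarrow> real^4).
        slice_space2 T \<subseteq> span ((\<lambda>i. c i *\<^sub>R outer2 (v i) (v i)) ` {..<y})"
    then obtain c and v :: "nat \<Rightarrow> real^4"
      where "slice_space2 T \<subseteq> span ((\<lambda>i. c i *\<^sub>R outer2 (v i) (v i)) ` {..<y})"
      by blast
    hence "slice_space2 T \<subseteq> span ((\<lambda>i. outer2 (c i *\<^sub>R v i) (v i)) ` {..<y})"
      by (simp add: outer2_scale)
    thus "9 \<le> y" using notP[of y "\<lambda>i. c i *\<^sub>R v i" v] by force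
  qed
  show ?thesis using d s by simp
qed

end
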